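(* In the gradient-tracking setting (see context), let $K_z=K_y\in\mathbb{R}^{Nd\times Nd}$ be such that $F$ has all its eigenvalues except $d$ of them (counted with algebraic multiplicity) inside the open unit disc. Then for every $\theta_0\in\mathbb{R}^p$ and every initial condition $(x(0),z(0))\in\mathbb{R}^{Nd}\times\mathbb{R}^{Nd}$ with $\sum_{i=1}^N z_i(0)=0$, the trajectory of $\begin{bmatrix}x\\ z\end{bmatrix}^+=F\begin{bmatrix}x\\ z\end{bmatrix}+G\theta_0$ is bounded and $\lim_{t\to\infty}x_i(t)=\Sigma\theta_0$ for every $i=1,\dots,N$.
   Context: Let $N,d,p$ be positive integers. For $i=1,\dots,N$ let $C_i\in\mathbb{R}^{d\times d}$ be symmetric positive definite and $\Gamma_i\in\mathbb{R}^{d\times p}$; set $Q_i:=-C_i\Gamma_i$, $C:=\mathrm{diag}(C_1,\dots,C_N)$ (block diagonal), $Q:=\mathrm{col}(Q_1,\dots,Q_N)$, and $\Sigma:=\big(\sum_{i=1}^N C_i\big)^{-1}\sum_{i=1}^N C_i\Gamma_i$; $\Sigma\theta_0$ is the unique minimizer of $\sum_i \frac12(\theta-\Gamma_i\theta_0)^\top C_i(\theta-\Gamma_i\theta_0)$. Gradient-tracking setting: $A\in\mathbb{R}^{N\times N}$ is row stochastic ($A\mathbf{1}_N=\mathbf{1}_N$, nonnegative entries) and $\tilde A\in\mathbb{R}^{N\times N}$ is column stochastic ($\mathbf{1}_N^\top\tilde A=\mathbf{1}_N^\top$, nonnegative entries), each having $1$ as a simple eigenvalue with all other eigenvalues in the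 open unit disc; $\mathbf{A}:=A\otimes I_d$, $\tilde{\mathbf{A}}:=\tilde A\otimes I_d$. State $(x,z)$ with $x=(x_1,\dots,x_N)$, $z=(z_1,\dots,z_N)$, $x_i,z_i\in\mathbb{R}^d$. For gains $K_y,K_z\in\mathbb{R}^{Nd\times Nd}$, $F=\begin{bmatrix}\mathbf{A}+K_yC & K_z\\ (\tilde{\mathbf{A}}-I_{Nd})C & \tilde{\mathbf{A}}\end{bmatrix}$, $G=\begin{bmatrix}K_yQ\\ (\tilde{\mathbf{A}}-I_{Nd})Q\end{bmatrix}$, $\theta_0\in\mathbb{R}^p$. *)

theory Defs
  imports Complex_Main "Jordan_Normal_Form.Jordan_Normal_Form"
begin

text \<open>Block index convention: agent i (0-based, i < N), component k (k < d)
  sits at position i*d + k of a stacked vector in R^(N d).\<close>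

definition kron_I :: "real mat \<Rightarrow> nat \<Rightarrow> real mat" where
  "kron_I A d = mat (dim_row A * d) (dim_col A * d)
     (\<lambda>(r,c). A $$ (r div d, c div d) * (if r mod d = c mod d then 1 else 0))"

definition blockdiag :: "nat \<Rightarrow> nat \<Rightarrow> (nat \<Rightarrow> real mat) \<Rightarrow> real mat" where
  "blockdiag N d Cs = mat (N*d) (N*d)
     (\<lambda>(r,c). if r div d = c div d then Cs (r div d) $$ (r mod d, c mod d) else 0)"

definition Qcol :: "nat \<Rightarrow> nat \<Rightarrow> nat \<Rightarrow> (nat \<Rightarrow> real mat) \<Rightarrow> (nat \<Rightarrow> real mat) \<Rightarrow> real mat" where
  "Qcol N d p Cs Gs = mat (N*d) p (\<lambda>(r,c). (- (Cs (r div d) * Gs (r div d))) $$ (r mod d, c))"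

definition symmetric_pd :: "nat \<Rightarrow> real mat \<Rightarrow> bool" where
  "symmetric_pd d C \<longleftrightarrow> C \<in> carrier_mat d d \<and> transpose_mat C = C \<and>
     (\<forall>v \<in> carrier_vec d. v \<noteq> 0\<^sub>v d \<longrightarrow> v \<bullet> (C *\<^sub>v v) > 0)"

definition row_stochastic :: "nat \<Rightarrow> real mat \<Rightarrow> bool" where
  "row_stochastic N A \<longleftrightarrow> A \<in> carrier_mat N N \<and> (\<forall>i<N. \<forall>j<N. A $$ (i,j) \<ge> 0) \<and>
     (\<forall>i<N. (\<Sum>j<N. A $$ (i,j)) = 1)"

definition col_stochastic :: "nat \<Rightarrow> real mat \<Rightarrow> bool" where
  "col_stochastic N A \<longleftrightarrow> A \<in> carrier_mat N N \<and> (\<forall>i<N. \<forall>j<N. A $$ (i,j) \<ge> 0) \<and>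
     (\<forall>j<N. (\<Sum>i<N. A $$ (i,j)) = 1)"

definition simple_one_rest_stable :: "real mat \<Rightarrow> bool" where
  "simple_one_rest_stable A \<longleftrightarrow>
     order 1 (char_poly (map_mat complex_of_real A)) = 1 \<and>
     (\<forall>z. eigenvalue (map_mat complex_of_real A) z \<longrightarrow> z \<noteq> 1 \<longrightarrow> cmod z < 1)"

definition num_eigs_outside_disc :: "real mat \<Rightarrow> nat" where
  "num_eigs_outside_disc M =
     (let P = char_poly (map_mat complex_of_real M) in
      \<Sum>z \<in> {z. poly P z = 0 \<and> cmod z \<ge> 1}. order z P)"

definition Fmat :: "nat \<Rightarrow> nat \<Rightarrow> real mat \<Rightarrow> real mat \<Rightarrow> (nat \<Rightarrow> real mat)
    \<Rightarrow> real mat \<Rightarrow> real mat \<Rightarrow> real mat" where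
  "Fmat N d A At Cs Ky Kz =
     four_block_mat (kron_I A d + Ky * blockdiag N d Cs) Kz
                    ((kron_I At d - 1\<^sub>m (N*d)) * blockdiag N d Cs) (kron_I At d)"

definition Gmat :: "nat \<Rightarrow> nat \<Rightarrow> nat \<Rightarrow> real mat \<Rightarrow> (nat \<Rightarrow> real mat)
    \<Rightarrow> (nat \<Rightarrow> real mat) \<Rightarrow> real mat \<Rightarrow> real mat" where
  "Gmat N d p At Cs Gs Ky =
     mat (2*(N*d)) p (\<lambda>(r,c). if r < N*d then (Ky * Qcol N d p Cs Gs) $$ (r,c)
        else ((kron_I At d - 1\<^sub>m (N*d)) * Qcol N d p Cs Gs) $$ (r - N*d, c))"

text \<open>Sigma = (sum C_i)^{-1} (sum C_i Gamma_i), as the unique solution S of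
  (sum C_i) S = sum C_i Gamma_i.\<close>
definition Sigma_mat :: "nat \<Rightarrow> nat \<Rightarrow> nat \<Rightarrow> (nat \<Rightarrow> real mat) \<Rightarrow> (nat \<Rightarrow> real mat) \<Rightarrow> real mat" where
  "Sigma_mat N d p Cs Gs =
     (THE S. S \<in> carrier_mat d p \<and>
        mat d d (\<lambda>(k,l). \<Sum>i<N. Cs i $$ (k,l)) * S =
        mat d p (\<lambda>(k,l). \<Sum>i<N. (Cs i * Gs i) $$ (k,l)))"

primrec traj :: "real mat \<Rightarrow> real mat \<Rightarrow> real vec \<Rightarrow> real vec \<Rightarrow> nat \<Rightarrow> real vec" where
  "traj F G th w0 0 = w0"
| "traj F G th w0 (Suc t) = F *\<^sub>v traj F G th w0 t + G *\<^sub>v th"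

end

theory Submission
  imports Defs "Jordan_Normal_Form.Spectral_Radius"
begin


lemma sum_split_add: "(\<Sum>j<(a::nat)+b. g j) = (\<Sum>j<a. g j) + (\<Sum>j<b. g (a+j))"
  by (induction b) (auto simp: ac_simps)
lemma sum_blocks: "(\<Sum>j<(N::nat)*d. g j) = (\<Sum>i<N. \<Sum>l<d. g (i*d+l))"
proof (induction N)
  case 0 then show ?case by simp
next
  case (Suc N)
  have "(\<Sum>j<Suc N*d. g j) = (\<Sum>j<N*d + d. g j)" by (simp add: add.commute)
  also have "\<dots> = (\<Sum>j<N*d. g j) + (\<Sum>l<d. g (N*d+l))" by (rule sum_split_add)
  finally show ?case using Suc by simp
qed

lemma idx_lt: "i < N \<Longrightarrow> k < (d::nat) \<Longrightarrow> i*d+k < N*d"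
proof -
  assume "i < N" "k < d"
  hence "i*d + k < i*d + d" by simp
  also have "\<dots> = Suc i * d" by simp
  also have "\<dots> \<le> N*d" using \<open>i<N\<close> by (intro mult_le_mono1) simp
  finally show ?thesis .
qed

lemma idx_div: "k < (d::nat) \<Longrightarrow> (i*d+k) div d = i" by simp
lemma idx_mod: "k < (d::nat) \<Longrightarrow> (i*d+k) mod d = k" by simp

lemma mv_index:
  assumes "A \<in> carrier_mat nr nc" "v \<in> carrier_vec nc" "i < nr"
  shows "(A *\<^sub>v v) $ i = (\<Sum>j<nc. A $$ (i,j) * v $ j)"
  using assms by (auto simp: scalar_prod_def lessThan_atLeast0 row_def intro!: sum.cong)

lemma mm_index:
  assumes "A \<in> carrier_mat nr n" "B \<in> carrier_mat n nc" "i < nr" "j < nc"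
  shows "(A * B) $$ (i,j) = (\<Sum>l<n. A $$ (i,l) * B $$ (l,j))"
  using assms by (auto simp: scalar_prod_def lessThan_atLeast0 row_def col_def intro!: sum.cong)

lemma kron_idx:
  assumes "r < dim_row A * d" "c < dim_col A * d"
  shows "kron_I A d $$ (r,c) = A $$ (r div d, c div d) * (if r mod d = c mod d then 1 else 0)"
  using assms unfolding kron_I_def by simp

lemma kron_carrier: "A \<in> carrier_mat n n \<Longrightarrow> kron_I A d \<in> carrier_mat (n*d) (n*d)"
  unfolding kron_I_def by auto

lemma blockdiag_carrier: "blockdiag N d Cs \<in> carrier_mat (N*d) (N*d)"
  unfolding blockdiag_def by auto

lemma blockdiag_idx: "r < N*d \<Longrightarrow> c < N*d \<Longrightarrow> blockdiag N d Cs $$ (r,c) =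
   (if r div d = c div d then Cs (r div d) $$ (r mod d, c mod d) else 0)"
  unfolding blockdiag_def by simp

lemma Qcol_carrier: "Qcol N d p Cs Gs \<in> carrier_mat (N*d) p"
  unfolding Qcol_def by auto

lemma Qcol_idx: "r < N*d \<Longrightarrow> c < p \<Longrightarrow> Qcol N d p Cs Gs $$ (r,c) =
   (- (Cs (r div d) * Gs (r div d))) $$ (r mod d, c)"
  unfolding Qcol_def by simp

lemma char_poly_four_block_zero:
  fixes A1 :: "'a :: field mat"
  assumes A1: "A1 \<in> carrier_mat n n"
  and A2: "A2 \<in> carrier_mat n m" and A4: "A4 \<in> carrier_mat m m"
  shows "char_poly (four_block_mat A1 A2 (0\<^sub>m m n) A4) = char_poly A1 * char_poly A4"
proof -
  let ?cm = "\<lambda> A. [:0, 1:] \<cdot>\<^sub>m 1\<^sub>m (dim_row A) +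
         map_mat (\<lambda>a. [:- a:]) A"
  let ?B2 = "map_mat (\<lambda>a. [:- a:]) A2"
  have "char_poly (four_block_mat A1 A2 (0\<^sub>m m n) A4) = det (?cm (four_block_mat A1 A2 (0\<^sub>m m n) A4))"
    unfolding char_poly_defs using A1 A4 by simp
  also have "?cm (four_block_mat A1 A2 (0\<^sub>m m n) A4) = four_block_mat (?cm A1) ?B2 (0\<^sub>m m n) (?cm A4)"
    by (rule eq_matI, insert A1 A2 A4, auto simp: one_poly_def)
  also have "det \<dots> = det (?cm A1) * det (?cm A4)"
    by (rule det_four_block_mat_lower_left_zero[OF _ _ refl], insert A1 A2 A4, auto)
  also have "\<dots> = char_poly A1 * char_poly A4" unfolding char_poly_defs ..
  finally show ?thesis .
qed

lemma char_poly_one_mat: "char_poly (1\<^sub>m d :: 'a :: field mat) = [:-1, 1:] ^ d"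
proof -
  have "char_poly (1\<^sub>m d :: 'a mat) = (\<Prod>a\<leftarrow>diag_mat (1\<^sub>m d :: 'a mat). [:- a, 1:])"
    by (rule char_poly_upper_triangular[of _ d], auto simp: upper_triangular_def)
  also have "diag_mat (1\<^sub>m d :: 'a mat) = replicate d 1"
    by (rule nth_equalityI, auto simp: diag_mat_def)
  finally show ?thesis by (simp add: prod_list_replicate)
qed

lemma count_roots:
  fixes p :: "complex poly"
  assumes p0: "p \<noteq> 0"
  and S: "(\<Sum>z \<in> {z. poly (p * [:-1,1:]^d) z = 0 \<and> cmod z \<ge> 1}. order z (p * [:-1,1:]^d)) = d"
  and d: "d > 0"
  shows "poly p z = 0 \<Longrightarrow> cmod z < 1"
proof (rule ccontr)
  assume pz: "poly p z = 0" and "\<not> cmod z < 1"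
  hence zz: "cmod z \<ge> 1" by auto
  let ?P = "p * [:-1,1:]^d"
  let ?S = "{z. poly ?P z = 0 \<and> cmod z \<ge> 1}"
  have P0: "?P \<noteq> 0" using p0 by auto
  have fin: "finite ?S" by (rule finite_subset[OF _ poly_roots_finite[OF P0]]) auto
  have o1: "order 1 ?P = order 1 p + d"
    using order_mult[OF P0] order_power_n_n[of 1 d] by simp
  have oz: "order z ?P \<ge> 1" using pz order_mult[OF P0] p0 order_root[of p z] by auto
  have oz': "order z p \<ge> 1" using pz p0 order_root[of p z] by auto
  have inS1: "1 \<in> ?S" using d by (auto simp: poly_power)
  have inSz: "z \<in> ?S" using zz pz by auto
  show False
  proof (cases "z = 1")
    case True
    have "order 1 ?P \<le> (\<Sum>z \<in> ?S. order z ?P)"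
      by (rule member_le_sum[OF inS1 _ fin]) simp
    thus False using S o1 oz' True by simp
  next
    case False
    have "(\<Sum>x \<in> {1, z}. order x ?P) \<le> (\<Sum>x \<in> ?S. order x ?P)"
      by (rule sum_mono2[OF fin], use inS1 inSz in auto)
    thus False using S o1 oz False by simp
  qed
qed



lemma smult_pow_entry:
  fixes MC :: "complex mat" and r :: complex
  assumes MC: "MC \<in> carrier_mat q q" and r: "r \<noteq> 0"
  shows "MC ^\<^sub>m k = (r ^ k) \<cdot>\<^sub>m (((1/r) \<cdot>\<^sub>m MC) ^\<^sub>m k)"
proof (induction k)
  case 0
  then show ?case using MC by (auto intro!: eq_matI)
next
  case (Suc k)
  let ?Mr = "(1/r) \<cdot>\<^sub>m MC"
  have Mr: "?Mr \<in> carrier_mat q q" using MC by auto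
  have Mk: "?Mr ^\<^sub>m k \<in> carrier_mat q q" using Mr by auto
  have "MC ^\<^sub>m Suc k = (r ^ k \<cdot>\<^sub>m ?Mr ^\<^sub>m k) * MC" using Suc by simp
  also have "\<dots> = r ^ k \<cdot>\<^sub>m (?Mr ^\<^sub>m k * MC)" using mult_smult_assoc_mat[OF Mk MC] by simp
  also have "?Mr ^\<^sub>m k * MC = r \<cdot>\<^sub>m (?Mr ^\<^sub>m k * ?Mr)"
    using mult_smult_distrib[OF Mk MC, of "1/r"] r by (auto intro!: eq_matI)
  also have "r ^ k \<cdot>\<^sub>m (r \<cdot>\<^sub>m (?Mr ^\<^sub>m k * ?Mr)) = r ^ Suc k \<cdot>\<^sub>m (?Mr ^\<^sub>m Suc k)"
    by (auto intro!: eq_matI simp: mult.assoc)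
  finally show ?case .
qed

lemma spectral_max_lt1:
  fixes MC :: "complex mat"
  assumes MC: "MC \<in> carrier_mat q q" and q: "q > 0"
    and ev: "\<And>z. eigenvalue MC z \<Longrightarrow> cmod z < 1"
  shows "spectral_radius MC < 1"
proof -
  from spectral_radius_mem_max(1)[OF MC q] obtain z where
    z: "z \<in> spectrum MC" "spectral_radius MC = cmod z" by auto
  then show ?thesis using ev unfolding spectrum_def by auto
qed

lemma conv_abstract:
  fixes M :: "real mat"
  assumes M: "M \<in> carrier_mat q q" and q: "q > 0"
    and ev: "\<And>z. poly (char_poly (map_mat complex_of_real M)) z = 0 \<Longrightarrow> cmod z < 1"
    and h: "h \<in> carrier_vec q" and i: "i < q"
  shows "(\<lambda>t. (M ^\<^sub>m t *\<^sub>v h) $ i) \<longlonglongrightarrow> 0"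
proof -
  define MC where "MC = map_mat complex_of_real M"
  have MC: "MC \<in> carrier_mat q q" using M unfolding MC_def by auto
  have evMC: "cmod z < 1" if "eigenvalue MC z" for z
    using ev that eigenvalue_root_char_poly[OF MC] unfolding MC_def by auto
  define \<rho> where "\<rho> = spectral_radius MC"
  have rho1: "\<rho> < 1" unfolding \<rho>_def by (rule spectral_max_lt1[OF MC q evMC])
  have rho0: "\<rho> \<ge> 0"
  proof -
    from spectral_radius_mem_max(1)[OF MC q] show ?thesis unfolding \<rho>_def by auto
  qed
  define r :: real where "r = (1 + \<rho>) / 2"
  have r0: "r > 0" and r1: "r < 1" and rr: "\<rho> < r" using rho0 rho1 unfolding r_def by auto
  define Mr where "Mr = (1 / complex_of_real r) \<cdot>\<^sub>m MC"
  have Mr: "Mr \<in> carrier_mat q q" using MC unfolding Mr_def by auto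
  have evMr: "cmod mu < 1" if "eigenvalue Mr mu" for mu
  proof -
    from that obtain v where v: "eigenvector Mr v mu" unfolding eigenvalue_def by auto
    hence vc: "v \<in> carrier_vec q" and v0: "v \<noteq> 0\<^sub>v q" and Mv: "Mr *\<^sub>v v = mu \<cdot>\<^sub>v v"
      using Mr unfolding eigenvector_def by auto
    have "MC *\<^sub>v v = (complex_of_real r * mu) \<cdot>\<^sub>v v"
    proof (rule eq_vecI)
      fix j assume j: "j < dim_vec ((complex_of_real r * mu) \<cdot>\<^sub>v v)"
      hence jq: "j < q" using vc by auto
      have "(Mr *\<^sub>v v) $ j = mu * v $ j" using Mv jq vc by (metis carrier_vecD index_smult_vec(1))
      hence "(1 / complex_of_real r) * (MC *\<^sub>v v) $ j = mu * v $ j"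
        using jq MC vc unfolding Mr_def
        by (simp add: scalar_prod_def sum_distrib_left mult.assoc)
      thus "(MC *\<^sub>v v) $ j = ((complex_of_real r * mu) \<cdot>\<^sub>v v) $ j"
        using jq vc r0 by (auto simp: field_simps)
    qed (insert MC vc, auto)
    hence "eigenvector MC v (complex_of_real r * mu)" using vc v0 MC unfolding eigenvector_def by auto
    hence "eigenvalue MC (complex_of_real r * mu)" unfolding eigenvalue_def by auto
    hence "cmod (complex_of_real r * mu) \<le> \<rho>"
      using spectral_radius_mem_max(2)[OF MC q] unfolding \<rho>_def spectrum_def by auto
    hence "r * cmod mu \<le> \<rho>" using r0 by (simp add: norm_mult)
    hence "r * cmod mu < r" using rr by auto
    thus ?thesis using r0 by auto
  qed
  have "spectral_radius Mr < 1" by (rule spectral_max_lt1[OF Mr q evMr])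
  from spectral_radius_jnf_norm_bound_less_1_upper_triangular[OF Mr this]
  obtain c where c: "\<And>k. norm_bound (Mr ^\<^sub>m k) c" by auto
  have bnd: "\<bar>(M ^\<^sub>m k) $$ (i', j)\<bar> \<le> r ^ k * c" if "i' < q" "j < q" for i' j k
  proof -
    have "map_mat complex_of_real (M ^\<^sub>m k) = MC ^\<^sub>m k"
      unfolding MC_def by (rule of_real_hom.mat_hom_pow[OF M])
    also have "\<dots> = (complex_of_real r ^ k) \<cdot>\<^sub>m (Mr ^\<^sub>m k)"
      unfolding Mr_def by (rule smult_pow_entry[OF MC], use r0 in auto)
    finally have e: "map_mat complex_of_real (M ^\<^sub>m k) $$ (i', j) = ((complex_of_real r ^ k) \<cdot>\<^sub>m (Mr ^\<^sub>m k)) $$ (i', j)"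
      by simp
    have Mk: "M ^\<^sub>m k \<in> carrier_mat q q" using M by auto
    have Mrk: "Mr ^\<^sub>m k \<in> carrier_mat q q" using Mr by auto
    have "complex_of_real ((M ^\<^sub>m k) $$ (i', j)) = complex_of_real r ^ k * (Mr ^\<^sub>m k) $$ (i', j)"
    proof -
      have d1: "i' < dim_row (M ^\<^sub>m k)" "j < dim_col (M ^\<^sub>m k)" using Mk that by auto
      have d2: "i' < dim_row (Mr ^\<^sub>m k)" "j < dim_col (Mr ^\<^sub>m k)" using Mrk that by auto
      from e show ?thesis by (simp only: index_map_mat(1)[OF d1] index_smult_mat(1)[OF d2])
    qed
    hence "\<bar>(M ^\<^sub>m k) $$ (i', j)\<bar> = r ^ k * cmod ((Mr ^\<^sub>m k) $$ (i', j))"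
      by (metis norm_mult norm_of_real norm_power abs_of_nonneg r0 less_imp_le)
    also have "cmod ((Mr ^\<^sub>m k) $$ (i', j)) \<le> c" using c[of k] that Mrk Mr unfolding norm_bound_def by (auto simp: carrier_matD)
    hence "r ^ k * cmod ((Mr ^\<^sub>m k) $$ (i', j)) \<le> r ^ k * c" using r0 by (auto intro: mult_left_mono)
    finally show ?thesis .
  qed
  define S where "S = (\<Sum>j<q. \<bar>h $ j\<bar>)"
  show ?thesis
  proof (rule tendsto_0_le[where K=1])
    show "\<forall>\<^sub>F t in sequentially. norm ((M ^\<^sub>m t *\<^sub>v h) $ i) \<le> norm (r ^ t * (c * S)) * 1"
    proof (rule always_eventually, rule allI)
      fix t
      have Mk: "M ^\<^sub>m t \<in> carrier_mat q q" using M by auto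
      have "(M ^\<^sub>m t *\<^sub>v h) $ i = (\<Sum>j<q. (M ^\<^sub>m t) $$ (i, j) * h $ j)"
        by (rule mv_index[OF Mk h i])
      hence "norm ((M ^\<^sub>m t *\<^sub>v h) $ i) \<le> (\<Sum>j<q. \<bar>(M ^\<^sub>m t) $$ (i, j) * h $ j\<bar>)"
        by (simp add: sum_abs)
      also have "\<dots> \<le> (\<Sum>j<q. r ^ t * c * \<bar>h $ j\<bar>)"
        by (rule sum_mono, simp add: abs_mult, rule mult_right_mono, use bnd i in auto)
      also have "\<dots> = r ^ t * (c * S)" unfolding S_def by (simp add: sum_distrib_left mult.assoc)
      finally show "norm ((M ^\<^sub>m t *\<^sub>v h) $ i) \<le> norm (r ^ t * (c * S)) * 1" by simp
    qed
    show "(\<lambda>t. r ^ t * (c * S)) \<longlonglongrightarrow> 0"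
      by (rule tendsto_mult_left_zero, rule LIMSEQ_power_zero, use r0 r1 in auto)
  qed
qed



locale gt =
  fixes N d p :: nat and Cs Gs :: "nat \<Rightarrow> real mat" and A At Ky :: "real mat"
  assumes N: "N > 0" and d: "d > 0"
  and pd: "\<forall>i<N. symmetric_pd d (Cs i)"
  and Gs: "\<forall>i<N. Gs i \<in> carrier_mat d p"
  and rs: "row_stochastic N A" and cs: "col_stochastic N At"
  and Ky: "Ky \<in> carrier_mat (N*d) (N*d)"
begin

definition "KA = kron_I A d"
definition "KAt = kron_I At d"
definition "Cm = blockdiag N d Cs"
definition "Qm = Qcol N d p Cs Gs"
definition "F = Fmat N d A At Cs Ky Ky"
definition "G = Gmat N d p At Cs Gs Ky"

lemma A_car: "A \<in> carrier_mat N N" using rs unfolding row_stochastic_def by auto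
lemma At_car: "At \<in> carrier_mat N N" using cs unfolding col_stochastic_def by auto
lemma KA_car: "KA \<in> carrier_mat (N*d) (N*d)" unfolding KA_def by (rule kron_carrier[OF A_car])
lemma KAt_car: "KAt \<in> carrier_mat (N*d) (N*d)" unfolding KAt_def by (rule kron_carrier[OF At_car])
lemma Cm_car: "Cm \<in> carrier_mat (N*d) (N*d)" unfolding Cm_def by (rule blockdiag_carrier)
lemma Qm_car: "Qm \<in> carrier_mat (N*d) p" unfolding Qm_def by (rule Qcol_carrier)

lemma F_eq: "F = four_block_mat (KA + Ky * Cm) Ky ((KAt - 1\<^sub>m (N*d)) * Cm) KAt"
  unfolding F_def Fmat_def KA_def KAt_def Cm_def ..

lemma F_car: "F \<in> carrier_mat (N*d + N*d) (N*d + N*d)"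
  unfolding F_eq using KA_car Ky Cm_car KAt_car by (intro four_block_carrier_mat) auto

lemma KAt_idx: "r < N*d \<Longrightarrow> c < N*d \<Longrightarrow> KAt $$ (r,c) = At $$ (r div d, c div d) * (if r mod d = c mod d then 1 else 0)"
  unfolding KAt_def using At_car by (intro kron_idx) auto

lemma KA_idx: "r < N*d \<Longrightarrow> c < N*d \<Longrightarrow> KA $$ (r,c) = A $$ (r div d, c div d) * (if r mod d = c mod d then 1 else 0)"
  unfolding KA_def using A_car by (intro kron_idx) auto

lemma F_lo: assumes r: "r < N*d" and c: "c < N*d + N*d"
  shows "F $$ (N*d + r, c) = (if c < N*d then ((KAt - 1\<^sub>m (N*d)) * Cm) $$ (r, c) else KAt $$ (r, c - N*d))"
proof -
  have dims: "dim_row (KA + Ky * Cm) = N*d" "dim_col (KA + Ky * Cm) = N*d" "dim_row KAt = N*d" "dim_col KAt = N*d"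
    using KA_car KAt_car Ky Cm_car by auto
  have dims2: "dim_row Ky = N*d" "dim_col Ky = N*d" "dim_row Cm = N*d" "dim_col Cm = N*d"
    using Ky Cm_car by auto
  show ?thesis unfolding F_eq
    apply (subst index_mat_four_block(1))
    using r c by (simp_all add: dims dims2 del: index_mult_mat index_add_mat index_minus_mat)
qed

lemma sum_col_At: "j < N \<Longrightarrow> (\<Sum>i<N. At $$ (i, j)) = 1"
  using cs unfolding col_stochastic_def by auto

lemma sum_ind: assumes j: "j < N*d" and k: "k < d"
  shows "(\<Sum>i<N. (if i*d+k = j then 1 else 0 :: real)) = (if j mod d = k then 1 else 0)"
proof (cases "j mod d = k")
  case True
  have jd: "j div d < N" using j by (simp add: less_mult_imp_div_less)
  have "\<And>i. (i*d+k = j) = (i = j div d)"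
    using True d by (metis div_mult_mod_eq idx_div k)
  hence "(\<Sum>i<N. (if i*d+k = j then 1 else 0 :: real)) = (\<Sum>i<N. (if i = j div d then 1 else 0))" by simp
  also have "\<dots> = 1" using jd by simp
  finally show ?thesis using True by simp
next
  case False
  have "\<And>i. i*d+k \<noteq> j" using False k by auto
  then show ?thesis using False by simp
qed

lemma col_sum: assumes k: "k < d" and c: "c < N*d + N*d"
  shows "(\<Sum>i<N. F $$ (N*d + (i*d+k), c)) = (if N*d \<le> c \<and> c mod d = k then 1 else 0)"
proof (cases "c < N*d")
  case True
  have "(\<Sum>i<N. F $$ (N*d + (i*d+k), c)) = (\<Sum>i<N. ((KAt - 1\<^sub>m (N*d)) * Cm) $$ (i*d+k, c))"
    using F_lo idx_lt k c True by (intro sum.cong) auto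
  also have "\<dots> = (\<Sum>i<N. \<Sum>j<N*d. (KAt - 1\<^sub>m (N*d)) $$ (i*d+k, j) * Cm $$ (j, c))"
    using idx_lt k True KAt_car Cm_car by (intro sum.cong refl mm_index) auto
  also have "\<dots> = (\<Sum>j<N*d. (\<Sum>i<N. (KAt - 1\<^sub>m (N*d)) $$ (i*d+k, j)) * Cm $$ (j, c))"
    by (subst sum.swap) (simp add: sum_distrib_right)
  also have "\<dots> = 0"
  proof (rule sum.neutral, rule ballI)
    fix j assume "j \<in> {..<N*d}"
    hence j: "j < N*d" by auto
    have jd: "j div d < N" using j by (simp add: less_mult_imp_div_less)
    have "(\<Sum>i<N. (KAt - 1\<^sub>m (N*d)) $$ (i*d+k, j)) =
          (\<Sum>i<N. At $$ (i, j div d) * (if k = j mod d then 1 else 0) - (if i*d+k = j then 1 else 0))"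
      using idx_lt k j KAt_car by (intro sum.cong refl) (auto simp: KAt_idx)
    also have "\<dots> = (\<Sum>i<N. At $$ (i, j div d)) * (if k = j mod d then 1 else 0) - (\<Sum>i<N. (if i*d+k = j then 1 else 0))"
      by (simp add: sum_subtractf sum_distrib_right)
    also have "\<dots> = 0" using sum_col_At[OF jd] sum_ind[OF j k] by auto
    finally show "(\<Sum>i<N. (KAt - 1\<^sub>m (N*d)) $$ (i*d+k, j)) * Cm $$ (j, c) = 0" by simp
  qed
  finally show ?thesis using True by simp
next
  case False
  define c' where "c' = c - N*d"
  have c': "c' < N*d" and cc: "c = N*d + c'" using c False unfolding c'_def by auto
  have cmod: "c mod d = c' mod d" unfolding cc by simp
  have jd: "c' div d < N" using c' by (simp add: less_mult_imp_div_less)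
  have "(\<Sum>i<N. F $$ (N*d + (i*d+k), c)) = (\<Sum>i<N. KAt $$ (i*d+k, c'))"
    using F_lo idx_lt k c False unfolding c'_def by (intro sum.cong) auto
  also have "\<dots> = (\<Sum>i<N. At $$ (i, c' div d) * (if k = c' mod d then 1 else 0))"
    using idx_lt k c' by (intro sum.cong refl) (auto simp: KAt_idx)
  also have "\<dots> = (if k = c' mod d then 1 else 0)"
    using sum_col_At[OF jd] by (simp add: sum_distrib_right[symmetric])
  finally show ?thesis using False cmod by auto
qed

end


lemma sp_sum: "v \<in> carrier_vec n \<Longrightarrow> w \<in> carrier_vec n \<Longrightarrow> v \<bullet> w = (\<Sum>k<n. v$k * w$k)"
  by (auto simp: scalar_prod_def lessThan_atLeast0)

context gt begin

definition "Csum = mat d d (\<lambda>(k,l). \<Sum>i<N. Cs i $$ (k,l))"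
definition "Rsum = mat d p (\<lambda>(k,l). \<Sum>i<N. (Cs i * Gs i) $$ (k,l))"

lemma Cs_car: "i < N \<Longrightarrow> Cs i \<in> carrier_mat d d" using pd unfolding symmetric_pd_def by auto
lemma CG_car: "i < N \<Longrightarrow> Cs i * Gs i \<in> carrier_mat d p" using Cs_car Gs by (meson mult_carrier_mat)
lemma Csum_car: "Csum \<in> carrier_mat d d" unfolding Csum_def by auto
lemma Rsum_car: "Rsum \<in> carrier_mat d p" unfolding Rsum_def by auto

lemma Csum_mv: assumes v: "v \<in> carrier_vec d" and k: "k < d"
  shows "(Csum *\<^sub>v v) $ k = (\<Sum>i<N. (Cs i *\<^sub>v v) $ k)"
proof -
  have "(Csum *\<^sub>v v) $ k = (\<Sum>l<d. Csum $$ (k,l) * v $ l)" by (rule mv_index[OF Csum_car v k])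
  also have "\<dots> = (\<Sum>l<d. \<Sum>i<N. Cs i $$ (k,l) * v $ l)"
    using k by (intro sum.cong refl) (auto simp: Csum_def sum_distrib_right)
  also have "\<dots> = (\<Sum>i<N. \<Sum>l<d. Cs i $$ (k,l) * v $ l)" by (rule sum.swap)
  also have "\<dots> = (\<Sum>i<N. (Cs i *\<^sub>v v) $ k)"
    using Cs_car v k by (intro sum.cong refl, subst mv_index) auto
  finally show ?thesis .
qed

lemma Rsum_mv: assumes v: "v \<in> carrier_vec p" and k: "k < d"
  shows "(Rsum *\<^sub>v v) $ k = (\<Sum>i<N. ((Cs i * Gs i) *\<^sub>v v) $ k)"
proof -
  have "(Rsum *\<^sub>v v) $ k = (\<Sum>l<p. Rsum $$ (k,l) * v $ l)" by (rule mv_index[OF Rsum_car v k])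
  also have "\<dots> = (\<Sum>l<p. \<Sum>i<N. (Cs i * Gs i) $$ (k,l) * v $ l)"
    using k by (intro sum.cong refl) (auto simp: Rsum_def sum_distrib_right)
  also have "\<dots> = (\<Sum>i<N. \<Sum>l<p. (Cs i * Gs i) $$ (k,l) * v $ l)" by (rule sum.swap)
  also have "\<dots> = (\<Sum>i<N. ((Cs i * Gs i) *\<^sub>v v) $ k)"
    using CG_car v k by (intro sum.cong refl, subst mv_index) auto
  finally show ?thesis .
qed

lemma Csum_pd: assumes v: "v \<in> carrier_vec d" and v0: "v \<noteq> 0\<^sub>v d"
  shows "v \<bullet> (Csum *\<^sub>v v) > 0"
proof -
  have "v \<bullet> (Csum *\<^sub>v v) = (\<Sum>k<d. v$k * (Csum *\<^sub>v v)$k)"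
    using Csum_car v by (intro sp_sum) auto
  also have "\<dots> = (\<Sum>k<d. \<Sum>i<N. v$k * (Cs i *\<^sub>v v) $ k)"
    using Csum_mv[OF v] by (simp add: sum_distrib_left)
  also have "\<dots> = (\<Sum>i<N. \<Sum>k<d. v$k * (Cs i *\<^sub>v v) $ k)" by (rule sum.swap)
  also have "\<dots> = (\<Sum>i<N. v \<bullet> (Cs i *\<^sub>v v))"
    using Cs_car v by (intro sum.cong refl, subst sp_sum) (auto intro: mult_mat_vec_carrier)
  also have "\<dots> > 0"
  proof (rule sum_pos)
    show "finite {..<N}" by simp
    show "{..<N} \<noteq> {}" using N by auto
    fix i assume "i \<in> {..<N}"
    thus "0 < v \<bullet> (Cs i *\<^sub>v v)" using pd v v0 unfolding symmetric_pd_def by auto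
  qed
  finally show ?thesis .
qed

lemma Csum_inv: "\<exists>B. B \<in> carrier_mat d d \<and> B * Csum = 1\<^sub>m d \<and> Csum * B = 1\<^sub>m d"
proof -
  have "det Csum \<noteq> 0"
  proof
    assume "det Csum = 0"
    then obtain v where v: "v \<in> carrier_vec d" "v \<noteq> 0\<^sub>v d" "Csum *\<^sub>v v = 0\<^sub>v d"
      using det_0_iff_vec_prod_zero[OF Csum_car] by auto
    from Csum_pd[OF v(1,2)] v(3) v(1) show False by simp
  qed
  from det_non_zero_imp_unit[OF Csum_car this, of "()"]
  show ?thesis unfolding Units_def ring_mat_def by auto
qed

lemma Sigma_prop: "Sigma_mat N d p Cs Gs \<in> carrier_mat d p \<and> Csum * Sigma_mat N d p Cs Gs = Rsum"
proof -
  obtain B where B: "B \<in> carrier_mat d d" "B * Csum = 1\<^sub>m d" "Csum * B = 1\<^sub>m d" using Csum_inv by auto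
  have ex: "\<exists>!S. S \<in> carrier_mat d p \<and> Csum * S = Rsum"
  proof (rule ex1I[of _ "B * Rsum"])
    show "B * Rsum \<in> carrier_mat d p \<and> Csum * (B * Rsum) = Rsum"
      using B Rsum_car Csum_car by (auto simp: assoc_mult_mat[symmetric])
    fix S assume S: "S \<in> carrier_mat d p \<and> Csum * S = Rsum"
    hence "B * (Csum * S) = B * Rsum" by simp
    moreover have "B * (Csum * S) = (B * Csum) * S" using B S Csum_car by (intro assoc_mult_mat[symmetric]) auto
    moreover have "(B * Csum) * S = S" using B(2) S by (metis left_mult_one_mat)
    ultimately show "S = B * Rsum" by metis
  qed
  have eq: "Sigma_mat N d p Cs Gs = (THE S. S \<in> carrier_mat d p \<and> Csum * S = Rsum)"
    unfolding Sigma_mat_def Csum_def Rsum_def ..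
  show ?thesis unfolding eq by (rule theI'[OF ex])
qed

end


locale gt2 = gt +
  fixes th0 :: "real vec"
  assumes th0: "th0 \<in> carrier_vec p"
begin

definition "xi = Sigma_mat N d p Cs Gs *\<^sub>v th0"
definition "xs = vec (N*d) (\<lambda>r. xi $ (r mod d))"
definition "y = Cm *\<^sub>v xs + Qm *\<^sub>v th0"
definition "zs = - y"
definition "wstar = xs @\<^sub>v zs"

lemma S_car: "Sigma_mat N d p Cs Gs \<in> carrier_mat d p" using Sigma_prop by auto
lemma xi_car: "xi \<in> carrier_vec d" unfolding xi_def using S_car th0 by auto
lemma xs_car: "xs \<in> carrier_vec (N*d)" unfolding xs_def by auto
lemma y_car: "y \<in> carrier_vec (N*d)" unfolding y_def using Cm_car Qm_car xs_car th0 by auto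
lemma zs_car: "zs \<in> carrier_vec (N*d)" unfolding zs_def using y_car by auto

lemma xi_sum: assumes k: "k < d"
  shows "(\<Sum>i<N. (Cs i *\<^sub>v xi) $ k) = (\<Sum>i<N. ((Cs i * Gs i) *\<^sub>v th0) $ k)"
proof -
  have "Csum *\<^sub>v xi = (Csum * Sigma_mat N d p Cs Gs) *\<^sub>v th0"
    unfolding xi_def using Csum_car S_car th0 by (simp add: assoc_mult_mat_vec)
  also have "\<dots> = Rsum *\<^sub>v th0" using Sigma_prop by simp
  finally have "(Csum *\<^sub>v xi) $ k = (Rsum *\<^sub>v th0) $ k" by simp
  thus ?thesis using Csum_mv[OF xi_car k] Rsum_mv[OF th0 k] by simp
qed

lemma Cm_xs: assumes i: "i < N" and k: "k < d"
  shows "(Cm *\<^sub>v xs) $ (i*d+k) = (Cs i *\<^sub>v xi) $ k"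
proof -
  have ik: "i*d+k < N*d" using idx_lt[OF i k] .
  have "(Cm *\<^sub>v xs) $ (i*d+k) = (\<Sum>c<N*d. Cm $$ (i*d+k, c) * xs $ c)"
    by (rule mv_index[OF Cm_car xs_car ik])
  also have "\<dots> = (\<Sum>i'<N. \<Sum>l<d. Cm $$ (i*d+k, i'*d+l) * xs $ (i'*d+l))" by (rule sum_blocks)
  also have "\<dots> = (\<Sum>i'<N. \<Sum>l<d. (if i = i' then Cs i $$ (k,l) * xi $ l else 0))"
  proof (intro sum.cong refl)
    fix i' l assume "i' \<in> {..<N}" "l \<in> {..<d}"
    hence i': "i' < N" and l: "l < d" by auto
    have il: "i'*d+l < N*d" using idx_lt[OF i' l] .
    show "Cm $$ (i*d+k, i'*d+l) * xs $ (i'*d+l) = (if i = i' then Cs i $$ (k,l) * xi $ l else 0)"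
      unfolding Cm_def xs_def using ik il k l by (simp add: blockdiag_idx)
  qed
  also have "\<dots> = (\<Sum>l<d. Cs i $$ (k,l) * xi $ l)"
    by (subst sum.swap) (simp add: sum.delta i)
  also have "\<dots> = (Cs i *\<^sub>v xi) $ k" by (rule mv_index[symmetric, OF Cs_car[OF i] xi_car k])
  finally show ?thesis .
qed

lemma Qm_th: assumes i: "i < N" and k: "k < d"
  shows "(Qm *\<^sub>v th0) $ (i*d+k) = - ((Cs i * Gs i) *\<^sub>v th0) $ k"
proof -
  have ik: "i*d+k < N*d" using idx_lt[OF i k] .
  have "(Qm *\<^sub>v th0) $ (i*d+k) = (\<Sum>c<p. Qm $$ (i*d+k, c) * th0 $ c)"
    by (rule mv_index[OF Qm_car th0 ik])
  also have "\<dots> = (\<Sum>c<p. - ((Cs i * Gs i) $$ (k, c) * th0 $ c))"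
  proof (intro sum.cong refl)
    fix c assume "c \<in> {..<p}"
    hence c: "c < p" by auto
    show "Qm $$ (i*d+k, c) * th0 $ c = - ((Cs i * Gs i) $$ (k, c) * th0 $ c)"
      unfolding Qm_def using ik c k CG_car[OF i] by (simp add: Qcol_idx del: index_mult_mat)
  qed
  also have "\<dots> = - ((Cs i * Gs i) *\<^sub>v th0) $ k"
    using CG_car[OF i] th0 k by (simp add: mv_index sum_negf)
  finally show ?thesis .
qed

lemma y_idx: assumes i: "i < N" and k: "k < d"
  shows "y $ (i*d+k) = (Cs i *\<^sub>v xi) $ k - ((Cs i * Gs i) *\<^sub>v th0) $ k"
proof -
  have ik: "i*d+k < N*d" using idx_lt[OF i k] .
  show ?thesis unfolding y_def using ik Cm_car Qm_car Cm_xs[OF i k] Qm_th[OF i k] by simp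
qed

lemma y_sum: assumes k: "k < d" shows "(\<Sum>i<N. y $ (i*d+k)) = 0"
  using xi_sum[OF k] y_idx k by (simp add: sum_subtractf)

lemma KA_xs: "KA *\<^sub>v xs = xs"
proof (rule eq_vecI)
  fix r assume "r < dim_vec xs"
  hence r: "r < N*d" using xs_car by auto
  have rd: "r div d < N" using r by (simp add: less_mult_imp_div_less)
  have rm: "r mod d < d" using d by simp
  have "(KA *\<^sub>v xs) $ r = (\<Sum>c<N*d. KA $$ (r, c) * xs $ c)"
    by (rule mv_index[OF KA_car xs_car r])
  also have "\<dots> = (\<Sum>i'<N. \<Sum>l<d. KA $$ (r, i'*d+l) * xs $ (i'*d+l))" by (rule sum_blocks)
  also have "\<dots> = (\<Sum>i'<N. \<Sum>l<d. A $$ (r div d, i') * (if r mod d = l then xi $ l else 0))"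
  proof (intro sum.cong refl)
    fix i' l assume "i' \<in> {..<N}" "l \<in> {..<d}"
    hence i': "i' < N" and l: "l < d" by auto
    have il: "i'*d+l < N*d" using idx_lt[OF i' l] .
    show "KA $$ (r, i'*d+l) * xs $ (i'*d+l) = A $$ (r div d, i') * (if r mod d = l then xi $ l else 0)"
      unfolding xs_def using r il l by (simp add: KA_idx)
  qed
  also have "\<dots> = (\<Sum>i'<N. A $$ (r div d, i')) * xi $ (r mod d)"
    using rm by (simp add: sum_distrib_right sum.delta if_distrib[where f="\<lambda>x. _ * x"] cong: if_cong)
  also have "\<dots> = xs $ r" using rs rd r unfolding row_stochastic_def xs_def by auto
  finally show "(KA *\<^sub>v xs) $ r = xs $ r" .
qed (use KA_car xs_car in auto)

end


context gt2 begin

lemma G_car: "G \<in> carrier_mat (N*d + N*d) p" unfolding G_def Gmat_def by auto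

lemma G_mv: "G *\<^sub>v th0 = ((Ky * Qm) *\<^sub>v th0) @\<^sub>v (((KAt - 1\<^sub>m (N*d)) * Qm) *\<^sub>v th0)"
proof (rule eq_vecI)
  have c1: "Ky * Qm \<in> carrier_mat (N*d) p" using Ky Qm_car by auto
  have c2: "(KAt - 1\<^sub>m (N*d)) * Qm \<in> carrier_mat (N*d) p" using KAt_car Qm_car by auto
  show "dim_vec (G *\<^sub>v th0) = dim_vec (((Ky * Qm) *\<^sub>v th0) @\<^sub>v (((KAt - 1\<^sub>m (N*d)) * Qm) *\<^sub>v th0))"
    using G_car c1 c2 by auto
  fix r assume "r < dim_vec (((Ky * Qm) *\<^sub>v th0) @\<^sub>v (((KAt - 1\<^sub>m (N*d)) * Qm) *\<^sub>v th0))"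
  hence r: "r < N*d + N*d" using c1 c2 by auto
  have "(G *\<^sub>v th0) $ r = (\<Sum>c<p. G $$ (r,c) * th0 $ c)" by (rule mv_index[OF G_car th0 r])
  also have "\<dots> = (\<Sum>c<p. (if r < N*d then (Ky * Qm) $$ (r,c) else ((KAt - 1\<^sub>m (N*d)) * Qm) $$ (r - N*d, c)) * th0 $ c)"
    unfolding G_def Gmat_def Qm_def KAt_def using r by (intro sum.cong refl) (simp del: index_mult_mat)
  also have "\<dots> = (((Ky * Qm) *\<^sub>v th0) @\<^sub>v (((KAt - 1\<^sub>m (N*d)) * Qm) *\<^sub>v th0)) $ r"
  proof (cases "r < N*d")
    case True
    then show ?thesis using c1 c2 th0 Ky by (simp add: mv_index[OF c1 th0 True] del: index_mult_mat(1) index_mult_mat_vec)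
  next
    case False
    hence r': "r - N*d < N*d" using r by auto
    show ?thesis using False c1 c2 th0 r Ky by (simp add: mv_index[OF c2 th0 r'] del: index_mult_mat(1) index_mult_mat_vec)
  qed
  finally show "(G *\<^sub>v th0) $ r = (((Ky * Qm) *\<^sub>v th0) @\<^sub>v (((KAt - 1\<^sub>m (N*d)) * Qm) *\<^sub>v th0)) $ r" .
qed

lemma fixpoint: "F *\<^sub>v wstar + G *\<^sub>v th0 = wstar"
proof -
  define u where "u = Cm *\<^sub>v xs"
  define v where "v = Qm *\<^sub>v th0"
  have u: "u \<in> carrier_vec (N*d)" unfolding u_def using Cm_car xs_car by auto
  have v: "v \<in> carrier_vec (N*d)" unfolding v_def using Qm_car th0 by auto
  have s0: "u + zs + v = 0\<^sub>v (N*d)"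
    unfolding zs_def y_def u_def[symmetric] v_def[symmetric] using u v by (intro eq_vecI) auto
  have K0: "Ky *\<^sub>v u + Ky *\<^sub>v zs + Ky *\<^sub>v v = 0\<^sub>v (N*d)"
  proof -
    have "Ky *\<^sub>v (u + zs + v) = Ky *\<^sub>v u + Ky *\<^sub>v zs + Ky *\<^sub>v v"
      using Ky u v zs_car by (simp add: mult_add_distrib_mat_vec) (metis assoc_add_vec mult_mat_vec_carrier)
    moreover have "Ky *\<^sub>v (u + zs + v) = 0\<^sub>v (N*d)" unfolding s0 using Ky by (intro eq_vecI) auto
    ultimately show ?thesis by simp
  qed
  have T0: "KAt *\<^sub>v u + KAt *\<^sub>v zs + KAt *\<^sub>v v = 0\<^sub>v (N*d)"
  proof -
    have "KAt *\<^sub>v (u + zs + v) = KAt *\<^sub>v u + KAt *\<^sub>v zs + KAt *\<^sub>v v"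
      using KAt_car u v zs_car by (simp add: mult_add_distrib_mat_vec) (metis assoc_add_vec mult_mat_vec_carrier)
    moreover have "KAt *\<^sub>v (u + zs + v) = 0\<^sub>v (N*d)" unfolding s0 using KAt_car by (intro eq_vecI) auto
    ultimately show ?thesis by simp
  qed
  have Fw: "F *\<^sub>v wstar = ((KA + Ky * Cm) *\<^sub>v xs + Ky *\<^sub>v zs) @\<^sub>v (((KAt - 1\<^sub>m (N*d)) * Cm) *\<^sub>v xs + KAt *\<^sub>v zs)"
    unfolding F_eq wstar_def
    by (rule four_block_mat_mult_vec) (use KA_car Ky Cm_car KAt_car xs_car zs_car in auto)
  have top: "(KA + Ky * Cm) *\<^sub>v xs + Ky *\<^sub>v zs + (Ky * Qm) *\<^sub>v th0 = xs"
  proof -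
    have "(KA + Ky * Cm) *\<^sub>v xs = KA *\<^sub>v xs + Ky *\<^sub>v u"
      unfolding u_def using KA_car Ky Cm_car xs_car by (simp add: add_mult_distrib_mat_vec)
    moreover have "(Ky * Qm) *\<^sub>v th0 = Ky *\<^sub>v v" unfolding v_def using Ky Qm_car th0 by simp
    ultimately have "(KA + Ky * Cm) *\<^sub>v xs + Ky *\<^sub>v zs + (Ky * Qm) *\<^sub>v th0
       = xs + Ky *\<^sub>v u + Ky *\<^sub>v zs + Ky *\<^sub>v v" using KA_xs by simp
    also have "\<dots> = xs"
    proof (rule eq_vecI)
      fix i assume "i < dim_vec xs"
      hence i: "i < N*d" using xs_car by auto
      have "(Ky *\<^sub>v u + Ky *\<^sub>v zs + Ky *\<^sub>v v) $ i = 0" using K0 i by simp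
      thus "(xs + Ky *\<^sub>v u + Ky *\<^sub>v zs + Ky *\<^sub>v v) $ i = xs $ i" using i Ky xs_car by simp
    qed (use Ky xs_car in auto)
    finally show ?thesis .
  qed
  have bot: "((KAt - 1\<^sub>m (N*d)) * Cm) *\<^sub>v xs + KAt *\<^sub>v zs + ((KAt - 1\<^sub>m (N*d)) * Qm) *\<^sub>v th0 = zs"
  proof -
    have e1: "((KAt - 1\<^sub>m (N*d)) * Cm) *\<^sub>v xs = KAt *\<^sub>v u - u"
    proof -
      have "((KAt - 1\<^sub>m (N*d)) * Cm) *\<^sub>v xs = (KAt - 1\<^sub>m (N*d)) *\<^sub>v u" unfolding u_def
        by (rule assoc_mult_mat_vec) (use KAt_car Cm_car xs_car in auto)
      also have "\<dots> = KAt *\<^sub>v u - 1\<^sub>m (N*d) *\<^sub>v u"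
        by (rule minus_mult_distrib_mat_vec) (use KAt_car u in auto)
      finally show ?thesis using u by simp
    qed
    have e2: "((KAt - 1\<^sub>m (N*d)) * Qm) *\<^sub>v th0 = KAt *\<^sub>v v - v"
    proof -
      have "((KAt - 1\<^sub>m (N*d)) * Qm) *\<^sub>v th0 = (KAt - 1\<^sub>m (N*d)) *\<^sub>v v" unfolding v_def
        by (rule assoc_mult_mat_vec) (use KAt_car Qm_car th0 in auto)
      also have "\<dots> = KAt *\<^sub>v v - 1\<^sub>m (N*d) *\<^sub>v v"
        by (rule minus_mult_distrib_mat_vec) (use KAt_car v in auto)
      finally show ?thesis using v by simp
    qed
    show ?thesis unfolding e1 e2
    proof (rule eq_vecI)
      fix i assume "i < dim_vec zs"
      hence i: "i < N*d" using zs_car by auto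
      have "(KAt *\<^sub>v u + KAt *\<^sub>v zs + KAt *\<^sub>v v) $ i = 0" using T0 i by simp
      moreover have "zs $ i = - (u $ i + v $ i)"
      proof -
        have "zs = - (u + v)" unfolding zs_def y_def u_def v_def ..
        thus ?thesis using i u v by simp
      qed
      ultimately show "(KAt *\<^sub>v u - u + KAt *\<^sub>v zs + (KAt *\<^sub>v v - v)) $ i = zs $ i"
        using i KAt_car u v zs_car by simp
    qed (use KAt_car zs_car u v in auto)
  qed
  have c1: "(KA + Ky * Cm) *\<^sub>v xs + Ky *\<^sub>v zs \<in> carrier_vec (N*d)"
    by (rule carrier_vecI) (use KA_car Ky Cm_car xs_car zs_car in simp)
  have c2: "(Ky * Qm) *\<^sub>v th0 \<in> carrier_vec (N*d)"
    by (rule carrier_vecI) (use Ky Qm_car in simp)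
  have c3: "((KAt - 1\<^sub>m (N*d)) * Cm) *\<^sub>v xs + KAt *\<^sub>v zs \<in> carrier_vec (N*d)"
    by (rule carrier_vecI) (use KAt_car Cm_car zs_car in simp)
  have c4: "((KAt - 1\<^sub>m (N*d)) * Qm) *\<^sub>v th0 \<in> carrier_vec (N*d)"
    by (rule carrier_vecI) (use KAt_car Qm_car in simp)
  have "F *\<^sub>v wstar + G *\<^sub>v th0 = ((KA + Ky * Cm) *\<^sub>v xs + Ky *\<^sub>v zs + (Ky * Qm) *\<^sub>v th0)
     @\<^sub>v (((KAt - 1\<^sub>m (N*d)) * Cm) *\<^sub>v xs + KAt *\<^sub>v zs + ((KAt - 1\<^sub>m (N*d)) * Qm) *\<^sub>v th0)"
    unfolding Fw G_mv by (rule append_vec_add[OF c1 c2 c3 c4])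
  also have "\<dots> = wstar" unfolding top bot wstar_def ..
  finally show ?thesis .
qed

end


context gt begin

definition "q = N*d + (N - 1)*d"
definition "U1 = mat d q (\<lambda>(k,j). if N*d \<le> j \<and> j mod d = k then 1 else (0::real))"

lemma qd: "q + d = N*d + N*d"
  unfolding q_def using N by (cases N) auto

lemma q_mod: "(c + q) mod d = c mod d"
proof -
  have "q = (N + (N - 1)) * d" unfolding q_def by (simp add: algebra_simps)
  thus ?thesis by simp
qed

lemma q_pos: "q > 0" unfolding q_def using N d by simp

lemma U1_car: "U1 \<in> carrier_mat d q" unfolding U1_def by auto

lemma U1_sum: assumes k: "k < d"
  shows "(\<Sum>j<q. U1 $$ (k,j) * f j) + f (q + k) = (\<Sum>i<N. f (N*d + (i*d + k)))"
proof -
  obtain N' where NN: "N = Suc N'" using N by (cases N) auto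
  have qq: "q = N*d + N'*d" unfolding q_def using NN by simp
  have "(\<Sum>j<q. U1 $$ (k,j) * f j) = (\<Sum>j<N*d. U1 $$ (k,j) * f j) + (\<Sum>j<N'*d. U1 $$ (k,N*d+j) * f (N*d+j))"
    unfolding qq by (rule sum_split_add)
  also have "(\<Sum>j<N*d. U1 $$ (k,j) * f j) = 0"
    by (rule sum.neutral) (use k in \<open>auto simp: U1_def qq\<close>)
  also have "(\<Sum>j<N'*d. U1 $$ (k,N*d+j) * f (N*d+j)) = (\<Sum>i<N'. \<Sum>l<d. U1 $$ (k,N*d+(i*d+l)) * f (N*d+(i*d+l)))"
    by (rule sum_blocks)
  also have "\<dots> = (\<Sum>i<N'. \<Sum>l<d. (if l = k then f (N*d+(i*d+k)) else 0))"
  proof (intro sum.cong refl)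
    fix i l assume "i \<in> {..<N'}" "l \<in> {..<d}"
    hence i: "i < N'" and l: "l < d" by auto
    have "i*d + l < N'*d" by (rule idx_lt[OF i l])
    hence lt: "N*d+(i*d+l) < q" unfolding qq by simp
    have "(N*d+(i*d+l)) mod d = l" using l by (simp add: mod_add_left_eq[symmetric])
    thus "U1 $$ (k,N*d+(i*d+l)) * f (N*d+(i*d+l)) = (if l = k then f (N*d+(i*d+k)) else 0)"
      using k lt unfolding U1_def by auto
  qed
  also have "\<dots> = (\<Sum>i<N'. f (N*d+(i*d+k)))" using k by simp
  finally have "(\<Sum>j<q. U1 $$ (k,j) * f j) + f (q + k) = (\<Sum>i<N'. f (N*d+(i*d+k))) + f (N*d + (N'*d+k))"
    unfolding qq by (simp add: add.assoc)
  also have "\<dots> = (\<Sum>i<N. f (N*d + (i*d + k)))" unfolding NN by simp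
  finally show ?thesis .
qed

definition "F1 = mat q q (\<lambda>(i,j). F $$ (i,j))"
definition "F2 = mat q d (\<lambda>(i,j). F $$ (i,j+q))"
definition "F3 = mat d q (\<lambda>(i,j). F $$ (i+q,j))"
definition "F4 = mat d d (\<lambda>(i,j). F $$ (i+q,j+q))"

lemma F1_car: "F1 \<in> carrier_mat q q" unfolding F1_def by auto
lemma F2_car: "F2 \<in> carrier_mat q d" unfolding F2_def by auto
lemma F3_car: "F3 \<in> carrier_mat d q" unfolding F3_def by auto
lemma F4_car: "F4 \<in> carrier_mat d d" unfolding F4_def by auto

lemma F_split: "F = four_block_mat F1 F2 F3 F4"
proof -
  have "split_block F q q = (F1,F2,F3,F4)"
    unfolding split_block_def Let_def F1_def F2_def F3_def F4_def using F_car qd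
    by (auto simp: carrier_matD)
  from split_block(5)[OF this, of d d] show ?thesis using F_car qd by (auto simp: carrier_matD)
qed

lemma UF1: "U1 * F1 + F3 = U1"
proof (rule eq_matI)
  fix k c assume "k < dim_row U1" "c < dim_col U1"
  hence k: "k < d" and c: "c < q" using U1_car by auto
  have cc: "c < N*d + N*d" using c qd by simp
  have "(U1 * F1 + F3) $$ (k,c) = (\<Sum>j<q. U1 $$ (k,j) * F1 $$ (j,c)) + F3 $$ (k,c)"
    using k c U1_car F1_car F3_car by (simp add: mm_index[OF U1_car F1_car k c])
  also have "\<dots> = (\<Sum>j<q. U1 $$ (k,j) * F $$ (j,c)) + F $$ (q + k, c)"
    using k c by (simp add: F1_def F3_def add.commute)
  also have "\<dots> = (\<Sum>i<N. F $$ (N*d + (i*d + k), c))" by (rule U1_sum[OF k])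
  also have "\<dots> = U1 $$ (k,c)" unfolding col_sum[OF k cc] using k c by (simp add: U1_def)
  finally show "(U1 * F1 + F3) $$ (k,c) = U1 $$ (k,c)" .
qed (use U1_car F1_car F3_car in auto)

lemma UF2: "U1 * F2 + F4 = 1\<^sub>m d"
proof (rule eq_matI)
  fix k c assume "k < dim_row (1\<^sub>m d :: real mat)" "c < dim_col (1\<^sub>m d :: real mat)"
  hence k: "k < d" and c: "c < d" by auto
  have cc: "c + q < N*d + N*d" using c qd by simp
  have "(U1 * F2 + F4) $$ (k,c) = (\<Sum>j<q. U1 $$ (k,j) * F2 $$ (j,c)) + F4 $$ (k,c)"
    using k c U1_car F2_car F4_car by (simp add: mm_index[OF U1_car F2_car k c])
  also have "\<dots> = (\<Sum>j<q. U1 $$ (k,j) * F $$ (j,c+q)) + F $$ (q + k, c+q)"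
    using k c by (simp add: F2_def F4_def add.commute)
  also have "\<dots> = (\<Sum>i<N. F $$ (N*d + (i*d + k), c+q))" by (rule U1_sum[OF k])
  also have "\<dots> = (if c = k then 1 else 0)" unfolding col_sum[OF k cc] q_mod using c qd
    by (simp add: q_def)
  finally show "(U1 * F2 + F4) $$ (k,c) = (1\<^sub>m d :: real mat) $$ (k,c)" using k c by simp
qed (use U1_car F2_car F4_car in auto)

definition "T = four_block_mat (1\<^sub>m q) (0\<^sub>m q d) U1 (1\<^sub>m d)"
definition "Ti = four_block_mat (1\<^sub>m q) (0\<^sub>m q d) (- U1) (1\<^sub>m d)"
definition "M = F1 - F2 * U1"
definition "Fb = four_block_mat M F2 (0\<^sub>m d q) (1\<^sub>m d)"

lemma T_car: "T \<in> carrier_mat (q+d) (q+d)" unfolding T_def using U1_car by auto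
lemma Ti_car: "Ti \<in> carrier_mat (q+d) (q+d)" unfolding Ti_def using U1_car by auto
lemma M_car: "M \<in> carrier_mat q q" unfolding M_def using F1_car F2_car U1_car by auto
lemma Fb_car: "Fb \<in> carrier_mat (q+d) (q+d)" unfolding Fb_def using M_car by auto

lemma T_Ti: "T * Ti = 1\<^sub>m (q+d)"
proof -
  have "T * Ti = four_block_mat (1\<^sub>m q * 1\<^sub>m q + 0\<^sub>m q d * - U1) (1\<^sub>m q * 0\<^sub>m q d + 0\<^sub>m q d * 1\<^sub>m d)
      (U1 * 1\<^sub>m q + 1\<^sub>m d * - U1) (U1 * 0\<^sub>m q d + 1\<^sub>m d * 1\<^sub>m d)"
    unfolding T_def Ti_def by (rule mult_four_block_mat) (use U1_car in auto)
  also have "\<dots> = four_block_mat (1\<^sub>m q) (0\<^sub>m q d) (0\<^sub>m d q) (1\<^sub>m d)"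
    using U1_car by (intro cong_four_block_mat) auto
  finally show ?thesis by simp
qed

lemma Ti_T: "Ti * T = 1\<^sub>m (q+d)"
proof -
  have "Ti * T = four_block_mat (1\<^sub>m q * 1\<^sub>m q + 0\<^sub>m q d * U1) (1\<^sub>m q * 0\<^sub>m q d + 0\<^sub>m q d * 1\<^sub>m d)
      (- U1 * 1\<^sub>m q + 1\<^sub>m d * U1) (- U1 * 0\<^sub>m q d + 1\<^sub>m d * 1\<^sub>m d)"
    unfolding T_def Ti_def by (rule mult_four_block_mat) (use U1_car in auto)
  also have "\<dots> = four_block_mat (1\<^sub>m q) (0\<^sub>m q d) (0\<^sub>m d q) (1\<^sub>m d)"
    using U1_car by (intro cong_four_block_mat) auto
  finally show ?thesis by simp
qed

lemma TFTi: "T * F * Ti = Fb"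
proof -
  have "T * F = four_block_mat (1\<^sub>m q * F1 + 0\<^sub>m q d * F3) (1\<^sub>m q * F2 + 0\<^sub>m q d * F4)
      (U1 * F1 + 1\<^sub>m d * F3) (U1 * F2 + 1\<^sub>m d * F4)"
    unfolding T_def F_split by (rule mult_four_block_mat) (use U1_car F1_car F2_car F3_car F4_car in auto)
  also have "\<dots> = four_block_mat F1 F2 U1 (1\<^sub>m d)"
    using U1_car F1_car F2_car F3_car F4_car UF1 UF2 by (intro cong_four_block_mat) auto
  finally have TF: "T * F = four_block_mat F1 F2 U1 (1\<^sub>m d)" .
  have "T * F * Ti = four_block_mat (F1 * 1\<^sub>m q + F2 * - U1) (F1 * 0\<^sub>m q d + F2 * 1\<^sub>m d)
      (U1 * 1\<^sub>m q + 1\<^sub>m d * - U1) (U1 * 0\<^sub>m q d + 1\<^sub>m d * 1\<^sub>m d)"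
    unfolding TF Ti_def by (rule mult_four_block_mat) (use U1_car F1_car F2_car in auto)
  also have "\<dots> = Fb" unfolding Fb_def M_def
  proof (intro cong_four_block_mat)
    show "F1 * 1\<^sub>m q + F2 * - U1 = F1 - F2 * U1"
      using F1_car F2_car U1_car by (simp add: minus_add_uminus_mat)
  qed (use U1_car F1_car F2_car in auto)
  finally show ?thesis .
qed

end


context gt begin

lemma F_car': "F \<in> carrier_mat (q+d) (q+d)" using F_car qd by simp

lemma sim: "similar_mat F Fb"
proof (rule similar_matI[of F Fb Ti T "q+d"])
  show "{F, Fb, Ti, T} \<subseteq> carrier_mat (q+d) (q+d)" using F_car' Fb_car Ti_car T_car by auto
  show "Ti * T = 1\<^sub>m (q+d)" by (rule Ti_T)
  show "T * Ti = 1\<^sub>m (q+d)" by (rule T_Ti)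
  have "Ti * Fb * T = Ti * (T * F * Ti) * T" unfolding TFTi ..
  also have "\<dots> = (Ti * T) * F * (Ti * T)"
    using F_car' Ti_car T_car by (simp add: assoc_mult_mat[of _ "q+d" "q+d" _ "q+d" _ "q+d"])
  also have "\<dots> = F" unfolding Ti_T using F_car' by simp
  finally show "F = Ti * Fb * T" by simp
qed

lemma cp_real: "char_poly F = char_poly M * [:-1,1:]^d"
proof -
  have "char_poly F = char_poly Fb" by (rule char_poly_similar[OF sim])
  also have "\<dots> = char_poly M * char_poly (1\<^sub>m d :: real mat)"
    unfolding Fb_def by (rule char_poly_four_block_zero[OF M_car F2_car]) auto
  finally show ?thesis by (simp add: char_poly_one_mat)
qed

lemma cp_complex: "char_poly (map_mat complex_of_real F) = char_poly (map_mat complex_of_real M) * [:-1,1:]^d"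
proof -
  interpret mp: map_poly_comm_ring_hom "complex_of_real" ..
  have "char_poly (map_mat complex_of_real F) = map_poly complex_of_real (char_poly F)"
    by (rule of_real_hom.char_poly_hom[OF F_car'])
  also have "\<dots> = map_poly complex_of_real (char_poly M) * map_poly complex_of_real ([:-1,1:]^d)"
    unfolding cp_real by (rule mp.hom_mult)
  also have "map_poly complex_of_real (char_poly M) = char_poly (map_mat complex_of_real M)"
    by (rule of_real_hom.char_poly_hom[OF M_car, symmetric])
  also have "map_poly complex_of_real ([:-1,1:]^d) = [:-1,1:]^d"
    by (simp add: mp.hom_power)
  finally show ?thesis .
qed

lemma eig_M: assumes ne: "num_eigs_outside_disc F = d"
  and z: "poly (char_poly (map_mat complex_of_real M)) z = 0"
  shows "cmod z < 1"
proof -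
  have MC: "map_mat complex_of_real M \<in> carrier_mat q q" using M_car by auto
  have "char_poly (map_mat complex_of_real M) \<noteq> 0"
  proof
    assume "char_poly (map_mat complex_of_real M) = 0"
    with degree_monic_char_poly[OF MC] show False by simp
  qed
  moreover have "(\<Sum>z \<in> {z. poly (char_poly (map_mat complex_of_real M) * [:-1,1:]^d) z = 0 \<and> cmod z \<ge> 1}.
       order z (char_poly (map_mat complex_of_real M) * [:-1,1:]^d)) = d"
    using ne unfolding num_eigs_outside_disc_def Let_def cp_complex .
  ultimately show ?thesis using count_roots d z by blast
qed

end


lemma pow_commute: "A \<in> carrier_mat n n \<Longrightarrow> A * A ^\<^sub>m t = A ^\<^sub>m t * A"
proof (induction t)
  case 0 then show ?case by simp
next
  case (Suc t)
  have At: "A ^\<^sub>m t \<in> carrier_mat n n" using Suc by auto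
  have "A * A ^\<^sub>m Suc t = (A * A ^\<^sub>m t) * A" using Suc.prems At by (simp add: assoc_mult_mat[of _ n n _ n _ n])
  also have "\<dots> = (A ^\<^sub>m t * A) * A" using Suc by simp
  finally show ?case by simp
qed

context gt2 begin

definition "w x0 z0 t = traj F G th0 (x0 @\<^sub>v z0) t"

lemma w_car: assumes x0: "x0 \<in> carrier_vec (N*d)" and z0: "z0 \<in> carrier_vec (N*d)"
  shows "w x0 z0 t \<in> carrier_vec (N*d + N*d)"
proof (induction t)
  case 0 then show ?case using x0 z0 unfolding w_def by auto
next
  case (Suc t)
  then show ?case unfolding w_def using F_car G_car th0 by auto
qed

lemma ws_car: "wstar \<in> carrier_vec (N*d + N*d)" unfolding wstar_def using xs_car zs_car by auto

lemma e_step: assumes x0: "x0 \<in> carrier_vec (N*d)" and z0: "z0 \<in> carrier_vec (N*d)"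
  shows "w x0 z0 (Suc t) - wstar = F *\<^sub>v (w x0 z0 t - wstar)"
proof -
  have wc: "w x0 z0 t \<in> carrier_vec (N*d + N*d)" by (rule w_car[OF x0 z0])
  have "F *\<^sub>v (w x0 z0 t - wstar) = F *\<^sub>v w x0 z0 t - F *\<^sub>v wstar"
    by (rule mult_minus_distrib_mat_vec[OF F_car wc ws_car])
  also have "\<dots> = (F *\<^sub>v w x0 z0 t + G *\<^sub>v th0) - (F *\<^sub>v wstar + G *\<^sub>v th0)"
    by (rule eq_vecI) (use F_car G_car th0 wc ws_car in auto)
  also have "\<dots> = w x0 z0 (Suc t) - wstar" unfolding fixpoint unfolding w_def by simp
  finally show ?thesis by simp
qed

definition "g x0 z0 t = T *\<^sub>v (w x0 z0 t - wstar)"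
definition "h0 x0 z0 = vec q (\<lambda>i. g x0 z0 0 $ i)"

lemma g_car: assumes x0: "x0 \<in> carrier_vec (N*d)" and z0: "z0 \<in> carrier_vec (N*d)"
  shows "g x0 z0 t \<in> carrier_vec (q+d)"
  unfolding g_def by (intro carrier_vecI) (use T_car in simp)

lemma g0_low: assumes x0: "x0 \<in> carrier_vec (N*d)" and z0: "z0 \<in> carrier_vec (N*d)"
  and zsum: "\<forall>k<d. (\<Sum>i<N. z0 $ (i*d + k)) = 0"
  and k: "k < d"
  shows "g x0 z0 0 $ (q + k) = 0"
proof -
  define e0 where "e0 = w x0 z0 0 - wstar"
  have e0: "e0 \<in> carrier_vec (q+d)" unfolding e0_def using w_car[OF x0 z0] ws_car qd by auto
  have qk: "q + k < q + d" using k by simp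
  have "g x0 z0 0 $ (q + k) = (\<Sum>j<q+d. T $$ (q+k, j) * e0 $ j)"
    unfolding g_def e0_def[symmetric] by (rule mv_index[OF T_car e0 qk])
  also have "\<dots> = (\<Sum>j<q. T $$ (q+k, j) * e0 $ j) + (\<Sum>j<d. T $$ (q+k, q+j) * e0 $ (q+j))"
    by (rule sum_split_add)
  also have "(\<Sum>j<q. T $$ (q+k, j) * e0 $ j) = (\<Sum>j<q. U1 $$ (k, j) * e0 $ j)"
    unfolding T_def using k U1_car by (intro sum.cong refl) auto
  also have "(\<Sum>j<d. T $$ (q+k, q+j) * e0 $ (q+j)) = (\<Sum>j<d. (if k = j then e0 $ (q+k) else 0))"
    unfolding T_def using k U1_car by (intro sum.cong refl) auto
  also have "\<dots> = e0 $ (q+k)" using k by simp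
  also have "(\<Sum>j<q. U1 $$ (k, j) * e0 $ j) + e0 $ (q+k) = (\<Sum>i<N. e0 $ (N*d + (i*d + k)))"
    by (rule U1_sum[OF k])
  also have "\<dots> = (\<Sum>i<N. z0 $ (i*d+k) - zs $ (i*d+k))"
  proof (intro sum.cong refl)
    fix i assume "i \<in> {..<N}"
    hence ik: "i*d+k < N*d" using idx_lt k by auto
    show "e0 $ (N*d + (i*d + k)) = z0 $ (i*d+k) - zs $ (i*d+k)"
      unfolding e0_def w_def wstar_def using ik x0 z0 xs_car zs_car by simp
  qed
  also have "\<dots> = 0"
  proof -
    have "(\<Sum>i<N. zs $ (i*d+k)) = - (\<Sum>i<N. y $ (i*d+k))"
      unfolding zs_def using idx_lt k y_car by (simp add: sum_negf[symmetric])
    thus ?thesis using zsum k y_sum[OF k] by (simp add: sum_subtractf)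
  qed
  finally show ?thesis .
qed

lemma g_form: assumes x0: "x0 \<in> carrier_vec (N*d)" and z0: "z0 \<in> carrier_vec (N*d)"
  and zsum: "\<forall>k<d. (\<Sum>i<N. z0 $ (i*d + k)) = 0"
  shows "g x0 z0 t = (M ^\<^sub>m t *\<^sub>v h0 x0 z0) @\<^sub>v 0\<^sub>v d"
proof (induction t)
  case 0
  show ?case
  proof (rule eq_vecI)
    fix i assume "i < dim_vec ((M ^\<^sub>m 0 *\<^sub>v h0 x0 z0) @\<^sub>v 0\<^sub>v d)"
    hence i: "i < q + d" using M_car by (simp add: h0_def)
    show "g x0 z0 0 $ i = ((M ^\<^sub>m 0 *\<^sub>v h0 x0 z0) @\<^sub>v 0\<^sub>v d) $ i"
    proof (cases "i < q")
      case True
      then show ?thesis using M_car by (simp add: h0_def)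
    next
      case False
      then obtain k where k: "k < d" and ik: "i = q + k" using i by (metis add_diff_inverse_nat add_less_cancel_left)
      show ?thesis using g0_low[OF x0 z0 zsum k] M_car k unfolding ik by (simp add: h0_def)
    qed
  qed (use g_car[OF x0 z0] M_car in \<open>auto simp: h0_def\<close>)
next
  case (Suc t)
  have wc: "w x0 z0 t - wstar \<in> carrier_vec (q+d)" using w_car[OF x0 z0] ws_car qd by auto
  have h: "h0 x0 z0 \<in> carrier_vec q" unfolding h0_def by auto
  have Mt: "M ^\<^sub>m t \<in> carrier_mat q q" using M_car by auto
  have mh: "M ^\<^sub>m t *\<^sub>v h0 x0 z0 \<in> carrier_vec q" using M_car h by (intro carrier_vecI) simp
  have mh2: "M ^\<^sub>m Suc t *\<^sub>v h0 x0 z0 \<in> carrier_vec q" using M_car h by (intro carrier_vecI) simp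
  have "g x0 z0 (Suc t) = T *\<^sub>v (F *\<^sub>v (w x0 z0 t - wstar))" unfolding g_def e_step[OF x0 z0] ..
  also have "\<dots> = (T * F) *\<^sub>v (w x0 z0 t - wstar)" using T_car F_car' wc by simp
  also have "T * F = T * F * (Ti * T)" using T_car F_car' by (simp add: Ti_T)
  also have "\<dots> = (T * F * Ti) * T" using T_car F_car' Ti_car by (simp add: assoc_mult_mat[of _ "q+d" "q+d" _ "q+d" _ "q+d"])
  also have "(T * F * Ti) * T *\<^sub>v (w x0 z0 t - wstar) = Fb *\<^sub>v g x0 z0 t"
    unfolding TFTi g_def using Fb_car T_car wc by simp
  also have "\<dots> = Fb *\<^sub>v ((M ^\<^sub>m t *\<^sub>v h0 x0 z0) @\<^sub>v 0\<^sub>v d)" unfolding Suc ..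
  also have "\<dots> = (M *\<^sub>v (M ^\<^sub>m t *\<^sub>v h0 x0 z0) + F2 *\<^sub>v 0\<^sub>v d) @\<^sub>v (0\<^sub>m d q *\<^sub>v (M ^\<^sub>m t *\<^sub>v h0 x0 z0) + 1\<^sub>m d *\<^sub>v 0\<^sub>v d)"
    unfolding Fb_def by (rule four_block_mat_mult_vec) (use M_car F2_car Mt h mh in auto)
  also have "\<dots> = (M ^\<^sub>m Suc t *\<^sub>v h0 x0 z0) @\<^sub>v 0\<^sub>v d"
  proof -
    have "M *\<^sub>v (M ^\<^sub>m t *\<^sub>v h0 x0 z0) = (M * M ^\<^sub>m t) *\<^sub>v h0 x0 z0" by (rule assoc_mult_mat_vec[symmetric, OF M_car Mt h])
    also have "\<dots> = M ^\<^sub>m Suc t *\<^sub>v h0 x0 z0" using pow_commute[OF M_car] by simp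
    finally have 1: "M *\<^sub>v (M ^\<^sub>m t *\<^sub>v h0 x0 z0) + F2 *\<^sub>v 0\<^sub>v d = M ^\<^sub>m Suc t *\<^sub>v h0 x0 z0"
      using F2_car M_car h mh mh2 by (intro eq_vecI) auto
    have 2: "0\<^sub>m d q *\<^sub>v (M ^\<^sub>m t *\<^sub>v h0 x0 z0) + 1\<^sub>m d *\<^sub>v 0\<^sub>v d = 0\<^sub>v d"
      using Mt h mh by (intro eq_vecI) auto
    show ?thesis unfolding 1 2 ..
  qed
  finally show ?case .
qed

lemma conv: assumes x0: "x0 \<in> carrier_vec (N*d)" and z0: "z0 \<in> carrier_vec (N*d)"
  and zsum: "\<forall>k<d. (\<Sum>i<N. z0 $ (i*d + k)) = 0"
  and ne: "num_eigs_outside_disc F = d"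
  and j: "j < N*d + N*d"
  shows "(\<lambda>t. w x0 z0 t $ j) \<longlonglongrightarrow> wstar $ j"
proof -
  have h: "h0 x0 z0 \<in> carrier_vec q" unfolding h0_def by auto
  have j': "j < q + d" using j qd by simp
  have ee: "w x0 z0 t - wstar = Ti *\<^sub>v g x0 z0 t" for t
  proof -
    have wc: "w x0 z0 t - wstar \<in> carrier_vec (q+d)" using w_car[OF x0 z0] ws_car qd by auto
    have "Ti *\<^sub>v g x0 z0 t = (Ti * T) *\<^sub>v (w x0 z0 t - wstar)" unfolding g_def using Ti_car T_car wc by simp
    thus ?thesis unfolding Ti_T using wc by simp
  qed
  have ge: "g x0 z0 t $ l = (if l < q then (M ^\<^sub>m t *\<^sub>v h0 x0 z0) $ l else 0)" if "l < q + d" for l t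
    unfolding g_form[OF x0 z0 zsum] using that M_car h by auto
  have ej: "(w x0 z0 t - wstar) $ j = (\<Sum>l<q+d. Ti $$ (j,l) * (if l < q then (M ^\<^sub>m t *\<^sub>v h0 x0 z0) $ l else 0))" for t
    unfolding ee using g_car[OF x0 z0] ge by (subst mv_index[OF Ti_car _ j']) auto
  have lim0: "(\<lambda>t. (w x0 z0 t - wstar) $ j) \<longlonglongrightarrow> 0"
    unfolding ej
  proof (rule tendsto_null_sum)
    fix l assume "l \<in> {..<q+d}"
    show "(\<lambda>t. Ti $$ (j,l) * (if l < q then (M ^\<^sub>m t *\<^sub>v h0 x0 z0) $ l else 0)) \<longlonglongrightarrow> 0"
    proof (cases "l < q")
      case True
      have "(\<lambda>t. (M ^\<^sub>m t *\<^sub>v h0 x0 z0) $ l) \<longlonglongrightarrow> 0"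
        by (rule conv_abstract[OF M_car q_pos eig_M[OF ne] h True])
      then show ?thesis using True by (simp add: tendsto_mult_right_zero)
    next
      case False
      then show ?thesis by simp
    qed
  qed
  have "(\<lambda>t. (w x0 z0 t - wstar) $ j + wstar $ j) \<longlonglongrightarrow> 0 + wstar $ j"
    by (rule tendsto_add[OF lim0 tendsto_const])
  moreover have "(w x0 z0 t - wstar) $ j + wstar $ j = w x0 z0 t $ j" for t
    using w_car[OF x0 z0] ws_car j by simp
  ultimately show ?thesis by simp
qed

end

theorem proposition2:
  fixes N d p :: nat
    and Cs Gs :: "nat \<Rightarrow> real mat"
    and A At Ky Kz :: "real mat"
    and th0 :: "real vec" and x0 z0 :: "real vec"
  assumes "N > 0" "d > 0" "p > 0"
    and "\<forall>i<N. symmetric_pd d (Cs i)"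
    and "\<forall>i<N. Gs i \<in> carrier_mat d p"
    and "row_stochastic N A" "simple_one_rest_stable A"
    and "col_stochastic N At" "simple_one_rest_stable At"
    and "Ky \<in> carrier_mat (N*d) (N*d)" "Kz = Ky"
    and "num_eigs_outside_disc (Fmat N d A At Cs Ky Kz) = d"
    and "th0 \<in> carrier_vec p"
    and "x0 \<in> carrier_vec (N*d)" "z0 \<in> carrier_vec (N*d)"
    and "\<forall>k<d. (\<Sum>i<N. z0 $ (i*d + k)) = 0"
  shows "(\<exists>B. \<forall>t. \<forall>j < 2*(N*d).
            \<bar>traj (Fmat N d A At Cs Ky Kz) (Gmat N d p At Cs Gs Ky) th0 (x0 @\<^sub>v z0) t $ j\<bar> \<le> B)
       \<and> (\<forall>i<N. \<forall>k<d.
            (\<lambda>t. traj (Fmat N d A At Cs Ky Kz) (Gmat N d p At Cs Gs Ky) th0 (x0 @\<^sub>v z0) t $ (i*d + k))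
              \<longlonglongrightarrow> (Sigma_mat N d p Cs Gs *\<^sub>v th0) $ k)"
proof -
  interpret gt2 N d p Cs Gs A At Ky th0
    by unfold_locales (use assms in auto)
  have FF: "Fmat N d A At Cs Ky Kz = F" unfolding F_def using assms(11) by simp
  have GG: "Gmat N d p At Cs Gs Ky = G" unfolding G_def ..
  have ne: "num_eigs_outside_disc F = d" using assms(12) FF by simp
  have tr: "traj (Fmat N d A At Cs Ky Kz) (Gmat N d p At Cs Gs Ky) th0 (x0 @\<^sub>v z0) t = w x0 z0 t" for t
    unfolding FF GG w_def ..
  have cv: "(\<lambda>t. w x0 z0 t $ j) \<longlonglongrightarrow> wstar $ j" if "j < N*d + N*d" for j
    by (rule conv[OF assms(14) assms(15) assms(16) ne that])
  have "\<forall>j. \<exists>K. j < N*d + N*d \<longrightarrow> (\<forall>t. \<bar>w x0 z0 t $ j\<bar> \<le> K)"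
  proof
    fix j
    show "\<exists>K. j < N*d + N*d \<longrightarrow> (\<forall>t. \<bar>w x0 z0 t $ j\<bar> \<le> K)"
    proof (cases "j < N*d + N*d")
      case True
      have "Bseq (\<lambda>t. w x0 z0 t $ j)" using cv[OF True] by (rule convergent_imp_Bseq[OF convergentI])
      then obtain K where "\<forall>t. norm (w x0 z0 t $ j) \<le> K" by (auto elim: BseqE)
      then show ?thesis by auto
    qed auto
  qed
  then obtain K where K: "\<And>j t. j < N*d + N*d \<Longrightarrow> \<bar>w x0 z0 t $ j\<bar> \<le> K j" by metis
  show ?thesis
  proof (intro conjI exI allI impI)
    fix t j assume j: "j < 2*(N*d)"
    hence j': "j < N*d + N*d" by simp
    have "\<bar>w x0 z0 t $ j\<bar> \<le> \<bar>K j\<bar>" using K[OF j', of t] abs_ge_self[of "K j"] by linarith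
    also have "\<dots> \<le> (\<Sum>l<N*d+N*d. \<bar>K l\<bar>)" by (rule member_le_sum) (use j' in auto)
    finally show "\<bar>traj (Fmat N d A At Cs Ky Kz) (Gmat N d p At Cs Gs Ky) th0 (x0 @\<^sub>v z0) t $ j\<bar>
       \<le> (\<Sum>l<N*d+N*d. \<bar>K l\<bar>)" unfolding tr .
  next
    fix i k assume i: "i < N" and k: "k < d"
    have ik: "i*d+k < N*d" by (rule idx_lt[OF i k])
    have "wstar $ (i*d+k) = xi $ k" unfolding wstar_def xs_def using ik k zs_car by simp
    hence "wstar $ (i*d+k) = (Sigma_mat N d p Cs Gs *\<^sub>v th0) $ k" unfolding xi_def .
    with cv[of "i*d+k"] ik show "(\<lambda>t. traj (Fmat N d A At Cs Ky Kz) (Gmat N d p At Cs Gs Ky) th0 (x0 @\<^sub>v z0) t $ (i*d + k))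
              \<longlonglongrightarrow> (Sigma_mat N d p Cs Gs *\<^sub>v th0) $ k" unfolding tr by simp
  qed
qed

end
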